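(* Let $R\subseteq\mathbb N$ be sparse, $d\in\mathbb N^+$, $\tilde R\subseteq^d R$, $n\in\mathbb N^+$, and $\mathbf A$ an $n$-tuple of operators on $R$, all $\neq_R0$. Then there is $\Delta_0$ such that for every $\Delta\in d\mathbb N$ with $\Delta\ge\Delta_0$: (i) for all $x\in\mathbb Z$, $x>\mathbf A\cdot P_\Delta(x;\mathbf A,\tilde R)$ iff $x>\inf\mathbf A\cdot\tilde R^n_\Delta$, and $x\le\mathbf A\cdot Q_\Delta(x;\mathbf A,\tilde R)$ iff $x\le\sup\mathbf A\cdot\tilde R^n_\Delta$; (ii) for all $x\in\mathbb Z$, $Q^1_\Delta(x;\mathbf A,\tilde R)=\sigma^{d\varepsilon}P^1_\Delta(x;\mathbf A,\tilde R)$ for some $\varepsilon\in\{-1,0,1\}$.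
   Context: Let $R\subseteq\mathbb N$ be infinite, enumerated increasingly as $(r_n)_{n\in\mathbb N}$; $\sigma:R\to R$ is the successor map $\sigma(r_n)=r_{n+1}$, $\sigma^k$ its $k$-fold iterate ($\sigma^0=\mathrm{id}$), $\sigma^{-1}$ the predecessor map with $\sigma^{-1}(\min R)=\min R$ and $\sigma^{-k}$ its iterate. An operator on $R$ is a function $R\to\mathbb Z$, $z\mapsto a_m\sigma^m(z)+\dots+a_0\sigma^0(z)$ with $a_i\in\mathbb Z$. For an operator $A$: $A=_R0$ if $Az=0$ for all $z\in R$; $A>_R0$ (resp. $A<_R0$) if $Az>0$ (resp. $Az<0$) for all but finitely many $z\in R$. $R$ is sparse if every operator $A$ satisfies (S1) $A=_R0$ or $A>_R0$ or $A<_R0$; and (S2) if $A>_R0$ then there is $\Delta\in\mathbb N$ with $A(\sigma^\Delta z)>z$ for all $z\in R$. $\tilde R\subseteq^dR$ means $\tilde R=\{r_{N+dt}:t\in\mathbb N\}$ for some $N\in\mathbb N$. For $\mathbf A$ an $n$-tuple of operators and $z\in R^n$, $\mathbf A\cdot z=\sum_iA_iz_i$; for $S\subseteq R^n$, $\mathbf A\cdot S=\{\mathbf A\cdot z:z\in S\}$. $\tilde R^n_\Delta=\{(z_1,\dots,z_n)\in\tilde R^n: z_i\ge\sigma^\Delta z_{i+1}\ (1\le i\le n)\}$ with $z_{n+1}:=\min\tilde R$. When $\Delta$ is large enough that $z\mapsto\mathbf A\cdot z$ is injective on $R^n_\Delta$: for nonempty $S\subseteq R^n_\Delta$ with $\mathbf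 A\cdot S$ bounded below (resp. above), $\min_{\mathbf A}S$ (resp. $\max_{\mathbf A}S$) is the unique $z\in S$ with $\mathbf A\cdot z=\min\mathbf A\cdot S$ (resp. $\max$). Then $P_\Delta(x;\mathbf A,\tilde R)=\max_{\mathbf A}\{z\in\tilde R^n_\Delta:\mathbf A\cdot z<x\}$ if $x>\inf\mathbf A\cdot\tilde R^n_\Delta$, and $=\min_{\mathbf A}\tilde R^n_\Delta$ otherwise; $Q_\Delta(x;\mathbf A,\tilde R)=\min_{\mathbf A}\{z\in\tilde R^n_\Delta:\mathbf A\cdot z\ge x\}$ if $x\le\sup\mathbf A\cdot\tilde R^n_\Delta$, and $=\max_{\mathbf A}\tilde R^n_\Delta$ otherwise. $P^i_\Delta,Q^i_\Delta$ denote the $i$-th coordinates. *)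

theory Defs
  imports Main "HOL-Library.Infinite_Set" "HOL-Library.Extended_Real"
begin

(* R :: nat set, enumerated increasingly by  enumerate R  (r_n = enumerate R n). *)

definition idx :: "nat set \<Rightarrow> nat \<Rightarrow> nat" where
  "idx R z = (LEAST n. enumerate R n = z)"

definition sig :: "nat set \<Rightarrow> nat \<Rightarrow> nat" where
  "sig R z = enumerate R (Suc (idx R z))"

(* predecessor map sigma^{-1}, with sigma^{-1}(min R) = min R *)
definition sigpred :: "nat set \<Rightarrow> nat \<Rightarrow> nat" where
  "sigpred R z = (if idx R z = 0 then z else enumerate R (idx R z - 1))"

definition sigpow :: "nat set \<Rightarrow> nat \<Rightarrow> nat \<Rightarrow> nat" where
  "sigpow R k = (sig R ^^ k)"

definition sigpowi :: "nat set \<Rightarrow> int \<Rightarrow> nat \<Rightarrow> nat" where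
  "sigpowi R k = (if 0 \<le> k then sig R ^^ nat k else sigpred R ^^ nat (- k))"

(* an operator a_m sigma^m + ... + a_0 sigma^0 is the coefficient list [a_0,...,a_m] *)
definition op_app :: "nat set \<Rightarrow> int list \<Rightarrow> nat \<Rightarrow> int" where
  "op_app R A z = (\<Sum>i<length A. A ! i * int (sigpow R i z))"

definition op_zero :: "nat set \<Rightarrow> int list \<Rightarrow> bool" where
  "op_zero R A \<longleftrightarrow> (\<forall>z\<in>R. op_app R A z = 0)"

definition op_pos :: "nat set \<Rightarrow> int list \<Rightarrow> bool" where
  "op_pos R A \<longleftrightarrow> finite {z\<in>R. \<not> op_app R A z > 0}"

definition op_neg :: "nat set \<Rightarrow> int list \<Rightarrow> bool" where
  "op_neg R A \<longleftrightarrow> finite {z\<in>R. \<not> op_app R A z < 0}"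

definition sparse :: "nat set \<Rightarrow> bool" where
  "sparse R \<longleftrightarrow> infinite R \<and>
     (\<forall>A. (op_zero R A \<or> op_pos R A \<or> op_neg R A) \<and>
          (op_pos R A \<longrightarrow> (\<exists>\<Delta>. \<forall>z\<in>R. op_app R A (sigpow R \<Delta> z) > int z)))"

definition subd :: "nat \<Rightarrow> nat set \<Rightarrow> nat set \<Rightarrow> bool" where
  "subd d R Rt \<longleftrightarrow> (\<exists>N. Rt = {enumerate R (N + d * t) | t. True})"

(* n-tuples are lists of length n (coordinate i is  z ! (i-1)) *)
definition dotA :: "nat set \<Rightarrow> int list list \<Rightarrow> nat list \<Rightarrow> int" where
  "dotA R As z = (\<Sum>i<length As. op_app R (As ! i) (z ! i))"

(* Rt^n_Delta; sigma is the successor map of R; z_{n+1} := min Rt *)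
definition tupDelta :: "nat set \<Rightarrow> nat set \<Rightarrow> nat \<Rightarrow> nat \<Rightarrow> nat list set" where
  "tupDelta R Rt n \<Delta> = {z. length z = n \<and> set z \<subseteq> Rt \<and>
      (\<forall>i<n. z ! i \<ge> sigpow R \<Delta> (if Suc i < n then z ! Suc i else Inf Rt))}"

definition minA :: "nat set \<Rightarrow> int list list \<Rightarrow> nat list set \<Rightarrow> nat list" where
  "minA R As S = (THE z. z \<in> S \<and> (\<forall>w\<in>S. dotA R As z \<le> dotA R As w))"

definition maxA :: "nat set \<Rightarrow> int list list \<Rightarrow> nat list set \<Rightarrow> nat list" where
  "maxA R As S = (THE z. z \<in> S \<and> (\<forall>w\<in>S. dotA R As w \<le> dotA R As z))"

definition infA :: "nat set \<Rightarrow> int list list \<Rightarrow> nat list set \<Rightarrow> ereal" where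
  "infA R As S = (INF z\<in>S. ereal (of_int (dotA R As z)))"

definition supA :: "nat set \<Rightarrow> int list list \<Rightarrow> nat list set \<Rightarrow> ereal" where
  "supA R As S = (SUP z\<in>S. ereal (of_int (dotA R As z)))"

definition Pfun :: "nat set \<Rightarrow> nat set \<Rightarrow> nat \<Rightarrow> int list list \<Rightarrow> int \<Rightarrow> nat list" where
  "Pfun R Rt \<Delta> As x =
     (let S = tupDelta R Rt (length As) \<Delta> in
      if ereal (of_int x) > infA R As S
      then maxA R As {z\<in>S. dotA R As z < x}
      else minA R As S)"

definition Qfun :: "nat set \<Rightarrow> nat set \<Rightarrow> nat \<Rightarrow> int list list \<Rightarrow> int \<Rightarrow> nat list" where
  "Qfun R Rt \<Delta> As x =
     (let S = tupDelta R Rt (length As) \<Delta> in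
      if ereal (of_int x) \<le> supA R As S
      then minA R As {z\<in>S. dotA R As z \<ge> x}
      else maxA R As S)"

end

theory Submission
  imports Defs
begin



context fixes R :: "nat set" assumes infR: "infinite R" begin

abbreviation "e \<equiv> enumerate R"

lemma idx_e[simp]: "idx R (e k) = k"
  unfolding idx_def
  by (rule Least_equality) (auto dest: inj_enumerate[OF infR, THEN injD])

lemma e_idx: "z \<in> R \<Longrightarrow> e (idx R z) = z"
  using enumerate_Ex[OF infR] by (metis idx_e)

lemma sig_e[simp]: "sig R (e k) = e (Suc k)"
  by (simp add: sig_def)

lemma sigpow_e[simp]: "sigpow R j (e k) = e (k + j)"
  unfolding sigpow_def by (induction j) auto

lemma sigpred_e[simp]: "sigpred R (e k) = e (k - 1)"
  by (simp add: sigpred_def)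

lemma sigpred_pow_e[simp]: "(sigpred R ^^ j) (e k) = e (k - j)"
  by (induction j) (auto simp: diff_Suc)

lemma op_app_e: "op_app R A (e k) = (\<Sum>i<length A. A ! i * int (e (k + i)))"
  by (simp add: op_app_def)

lemma e_ge: "k \<le> e k" using le_enumerate[OF infR] .

lemma e_mono_le: "a \<le> b \<Longrightarrow> e a \<le> e b" using infR by simp
lemma e_mono_lt: "a < b \<Longrightarrow> e a < e b" using infR by simp
lemma e_in: "e k \<in> R" using enumerate_in_set[OF infR] .

end



context fixes R :: "nat set" assumes infR: "infinite R" begin

definition coef :: "int list \<Rightarrow> nat \<Rightarrow> int" where
  "coef L i = (if i < length L then L ! i else 0)"

lemma op_app_coef: "length L \<le> M \<Longrightarrow> op_app R L z = (\<Sum>i<M. coef L i * int (sigpow R i z))"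
proof -
  assume "length L \<le> M"
  then have "(\<Sum>i<M. coef L i * int (sigpow R i z)) = (\<Sum>i<length L. coef L i * int (sigpow R i z))"
    by (intro sum.mono_neutral_right) (auto simp: coef_def)
  then show ?thesis unfolding op_app_def by (simp add: coef_def)
qed

lemma op_app_scale: "op_app R (map ((*) s) A) z = s * op_app R A z"
  by (simp add: op_app_def sum_distrib_left mult.assoc)

definition dlist :: "int \<Rightarrow> int list \<Rightarrow> int list" where
  "dlist s A = map (\<lambda>i. s * (coef (0 # A) i - coef A i)) [0..<Suc (length A)]"

lemma op_app_dlist: "op_app R (dlist s A) z = s * (op_app R (0 # A) z - op_app R A z)"
proof -
  have "op_app R (dlist s A) z = (\<Sum>i<Suc (length A). s * (coef (0 # A) i - coef A i) * int (sigpow R i z))"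
    unfolding op_app_def dlist_def by (intro sum.cong) (auto simp del: upt_Suc)
  also have "\<dots> = s * ((\<Sum>i<Suc (length A). coef (0 # A) i * int (sigpow R i z)) -
       (\<Sum>i<Suc (length A). coef A i * int (sigpow R i z)))"
    by (simp add: sum_distrib_left sum_subtractf algebra_simps)
  also have "\<dots> = s * (op_app R (0 # A) z - op_app R A z)"
    by (subst (1 2) op_app_coef[symmetric]) auto
  finally show ?thesis .
qed

lemma op_app_shift_e: "op_app R (0 # A) (e R k) = op_app R A (e R (Suc k))"
  unfolding op_app_e[OF infR] by (simp add: sum.lessThan_Suc_shift del: sum.lessThan_Suc)

lemma op_app_bound: "\<bar>op_app R A (e R k)\<bar> \<le> (\<Sum>i<length A. \<bar>A ! i\<bar>) * int (e R (k + length A))"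
proof -
  have "\<bar>op_app R A (e R k)\<bar> \<le> (\<Sum>i<length A. \<bar>A ! i * int (e R (k + i))\<bar>)"
    unfolding op_app_e[OF infR] by (rule sum_abs)
  also have "\<dots> \<le> (\<Sum>i<length A. \<bar>A ! i\<bar> * int (e R (k + length A)))"
    by (rule sum_mono) (auto simp: abs_mult intro!: mult_left_mono e_mono_le[OF infR])
  also have "\<dots> = (\<Sum>i<length A. \<bar>A ! i\<bar>) * int (e R (k + length A))"
    by (simp add: sum_distrib_right)
  finally show ?thesis .
qed

lemma finite_exc: "finite {z\<in>R. \<not> P z} \<Longrightarrow> \<exists>K. \<forall>k\<ge>K. P (e R k)"
proof -
  assume f: "finite {z\<in>R. \<not> P z}"
  obtain K where K: "\<forall>z\<in>{z\<in>R. \<not> P z}. z < K"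
    using f finite_nat_bounded by (metis lessThan_iff subsetD)
  show ?thesis
  proof (intro exI allI impI)
    fix k assume "K \<le> k"
    then have "K \<le> e R k" using e_ge[OF infR, of k] by linarith
    then show "P (e R k)" using K e_in[OF infR, of k] by force
  qed
qed

end



context fixes R :: "nat set" assumes sp: "sparse R" begin

lemma infR: "infinite R" using sp by (simp add: sparse_def)

lemma S2: "op_pos R A \<Longrightarrow> \<exists>D. \<forall>k. op_app R A (e R (k + D)) > int (e R k)"
proof -
  assume "op_pos R A"
  then obtain D where "\<forall>z\<in>R. op_app R A (sigpow R D z) > int z" using sp by (auto simp: sparse_def)
  then show ?thesis using e_in[OF infR] sigpow_e[OF infR] by metis
qed

lemma growth_step: "\<exists>D. \<forall>k. e R (k + D + 1) > e R (k + D) + e R k"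
proof -
  have pos: "op_pos R [-1, 1]"
  proof -
    have "\<forall>z\<in>R. op_app R [-1,1] z > 0"
    proof
      fix z assume "z \<in> R"
      then obtain k where "z = e R k" using e_idx[OF infR] by metis
      then show "op_app R [-1,1] z > 0" using e_mono_lt[OF infR, of k "Suc k"]
        by (simp add: op_app_e[OF infR])
    qed
    then have "{z\<in>R. \<not> op_app R [-1,1] z > 0} = {}" by blast
    then show ?thesis unfolding op_pos_def by (metis finite.emptyI)
  qed
  from S2[OF pos] obtain D where "\<forall>k. op_app R [-1, 1] (e R (k + D)) > int (e R k)" by blast
  then have h: "int (e R k) < int (e R (k + D + 1)) - int (e R (k + D))" for k
    by (simp add: op_app_e[OF infR])
  have "e R (k + D + 1) > e R (k + D) + e R k" for k using h[of k] by linarith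
  then show ?thesis by blast
qed

lemma growth_double: "\<exists>D. \<forall>k. e R (k + D) \<ge> 2 * e R k"
proof -
  obtain D where D: "\<forall>k. e R (k + D + 1) > e R (k + D) + e R k" using growth_step by blast
  have "e R (k + (D+1)) \<ge> 2 * e R k" for k
    using D[rule_format, of k] e_mono_le[OF infR, of k "k+D"] by simp
  then show ?thesis by blast
qed

lemma growth: "\<exists>T. \<forall>a. int (e R (a + T)) \<ge> L * int (e R a)"
proof -
  obtain D where D: "\<forall>k. e R (k + D) \<ge> 2 * e R k" using growth_double by blast
  have g: "e R (a + t * D) \<ge> 2 ^ t * e R a" for a t
  proof (induction t)
    case 0 then show ?case by simp
  next
    case (Suc t)
    have "2 ^ Suc t * e R a \<le> 2 * e R (a + t * D)" using Suc by simp
    also have "\<dots> \<le> e R (a + t * D + D)" using D by blast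
    also have "a + t * D + D = a + Suc t * D" by simp
    finally show ?case .
  qed
  show ?thesis
  proof (intro exI allI)
    fix a
    have "L * int (e R a) \<le> int (2 ^ nat L) * int (e R a)"
    proof (cases "L \<le> 0")
      case True
      then have "L * int (e R a) \<le> 0" by (simp add: mult_nonpos_nonneg)
      moreover have "0 \<le> int (2 ^ nat L) * int (e R a)" by simp
      ultimately show ?thesis by linarith
    next
      case False
      have "nat L < 2 ^ nat L" by (rule less_exp)
      then have "L \<le> int (2 ^ nat L)" using False by linarith
      then show ?thesis by (intro mult_right_mono) auto
    qed
    also have "\<dots> \<le> int (e R (a + nat L * D))"
    proof -
      have "int (2 ^ nat L * e R a) \<le> int (e R (a + nat L * D))" using g[of "nat L" a] by (simp only: of_nat_le_iff)
      then show ?thesis by simp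
    qed
    finally show "L * int (e R a) \<le> int (e R (a + nat L * D))" .
  qed
qed

lemma incr_step:
  assumes "\<not> op_zero R A"
  shows "\<exists>s D. (s = 1 \<or> s = -1) \<and>
     (\<forall>k. s * (op_app R A (e R (k + D + 1)) - op_app R A (e R (k + D))) > int (e R k))"
proof -
  obtain s where s: "s = 1 \<or> s = -1" and pos: "op_pos R (map ((*) s) A)"
  proof -
    have "op_pos R A \<or> op_neg R A" using sp assms by (auto simp: sparse_def)
    then show ?thesis
    proof
      assume "op_pos R A" then show ?thesis using that[of 1] by (simp add: op_pos_def op_app_scale[OF infR])
    next
      assume "op_neg R A" then show ?thesis using that[of "-1"]
        by (simp add: op_pos_def op_neg_def op_app_scale[OF infR])
    qed
  qed
  define g where "g k = s * op_app R A (e R k)" for k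
  obtain D1 where D1: "\<forall>k. g (k + D1) > int (e R k)"
    using S2[OF pos] by (auto simp: g_def op_app_scale[OF infR])
  have Bd: "op_app R (dlist s A) (e R k) = g (Suc k) - g k" for k
    by (simp add: op_app_dlist[OF infR] op_app_shift_e[OF infR] g_def algebra_simps)
  have "op_pos R (dlist s A)"
  proof (rule ccontr)
    assume np: "\<not> op_pos R (dlist s A)"
    have "\<exists>K. \<forall>k\<ge>K. g (Suc k) \<le> g k"
    proof -
      have "op_zero R (dlist s A) \<or> op_neg R (dlist s A)" using sp np by (auto simp: sparse_def)
      then show ?thesis
      proof
        assume "op_zero R (dlist s A)"
        then have "\<forall>k. g (Suc k) - g k = 0" using Bd e_in[OF infR] unfolding op_zero_def by metis
        then show ?thesis by force
      next
        assume "op_neg R (dlist s A)"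
        then obtain K where "\<forall>k\<ge>K. op_app R (dlist s A) (e R k) < 0"
          using finite_exc[OF infR, of "\<lambda>z. op_app R (dlist s A) z < 0"] by (auto simp: op_neg_def)
        then have "\<forall>k\<ge>K. g (Suc k) - g k < 0" using Bd by simp
        then show ?thesis by force
      qed
    qed
    then obtain K where K: "\<forall>k\<ge>K. g (Suc k) \<le> g k" by blast
    have dec: "g (K + j) \<le> g K" for j
    proof (induction j)
      case (Suc j) then show ?case using K[rule_format, of "K + j"] by simp
    qed simp
    define k where "k = nat (g K) + K"
    have "g (k + D1) > int (e R k)" using D1 by blast
    moreover have "int (e R k) \<ge> int k" using e_ge[OF infR] by simp
    moreover have "g (k + D1) \<le> g K" using dec[of "nat (g K) + D1"] by (simp add: k_def ac_simps)
    ultimately show False unfolding k_def by linarith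
  qed
  from S2[OF this] obtain D where "\<forall>k. op_app R (dlist s A) (e R (k + D)) > int (e R k)" by blast
  then have "\<forall>k. s * (op_app R A (e R (k + D + 1)) - op_app R A (e R (k + D))) > int (e R k)"
    using Bd by (simp add: g_def algebra_simps)
  then show ?thesis using s by blast
qed

lemma incr:
  assumes "\<not> op_zero R A"
  shows "\<exists>s D. (s = 1 \<or> s = -1) \<and>
     (\<forall>a b. D \<le> a \<longrightarrow> a < b \<longrightarrow> s * (op_app R A (e R b) - op_app R A (e R a)) > int (e R (b - 1 - D)))"
proof -
  obtain s D where s: "s = 1 \<or> s = -1" and D: "\<forall>k. s * (op_app R A (e R (k + D + 1)) - op_app R A (e R (k + D))) > int (e R k)"
    using incr_step[OF assms] by blast
  define F where "F k = op_app R A (e R k)" for k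
  have "s * (F b - F a) > int (e R (b - 1 - D))" if "D \<le> a" "a < b" for a b
    using that(2)
  proof (induction b)
    case 0 then show ?case by simp
  next
    case (Suc b)
    have st: "s * (F (Suc b) - F b) > int (e R (b - D))"
      using D[rule_format, of "b - D"] \<open>D \<le> a\<close> Suc.prems by (simp add: F_def)
    show ?case
    proof (cases "a = b")
      case True then show ?thesis using st by simp
    next
      case False
      then have "s * (F b - F a) > int (e R (b - 1 - D))" using Suc by simp
      then have "s * (F b - F a) > 0" by linarith
      then show ?thesis using st by (simp add: algebra_simps)
    qed
  qed
  then show ?thesis using s unfolding F_def by blast
qed

end



lemma chain_le:
  fixes K :: "nat \<Rightarrow> nat"
  assumes ch: "\<forall>j. Suc j < n \<longrightarrow> K (Suc j) + \<Delta> \<le> K j"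
  shows "i < j \<Longrightarrow> j < n \<Longrightarrow> K j + \<Delta> \<le> K i"
proof (induction j)
  case 0 then show ?case by simp
next
  case (Suc j)
  have a: "K (Suc j) + \<Delta> \<le> K j" using ch Suc.prems by blast
  show ?case
  proof (cases "i = j")
    case True then show ?thesis using a by simp
  next
    case False
    then have "K j + \<Delta> \<le> K i" using Suc by simp
    then show ?thesis using a by linarith
  qed
qed

lemma lex_core:
  fixes F :: "nat \<Rightarrow> nat \<Rightarrow> int" and E :: "nat \<Rightarrow> nat" and s :: "nat \<Rightarrow> int"
  assumes Emono: "\<And>a b. a \<le> b \<Longrightarrow> E a \<le> E b"
    and bound: "\<And>j k. j < n \<Longrightarrow> \<bar>F j k\<bar> \<le> C * int (E (k + M))"
    and incr: "\<And>j a b. j < n \<Longrightarrow> D \<le> a \<Longrightarrow> a < b \<Longrightarrow> s j * (F j b - F j a) > int (E (b - 1 - D))"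
    and sgn: "\<And>j. j < n \<Longrightarrow> s j = 1 \<or> s j = -1"
    and grow: "\<And>a. int (E (a + T)) \<ge> 2 * int n * C * int (E a)"
    and C0: "C \<ge> 0"
    and Dl: "\<Delta> \<ge> M + T + 1 + D"
    and chz: "\<forall>j. Suc j < n \<longrightarrow> Kz (Suc j) + \<Delta> \<le> Kz j"
    and chw: "\<forall>j. Suc j < n \<longrightarrow> Kw (Suc j) + \<Delta> \<le> Kw j"
    and lowz: "\<And>j. j < n \<Longrightarrow> \<Delta> \<le> Kz j"
    and i: "i < n" and eq: "\<And>j. j < i \<Longrightarrow> Kz j = Kw j" and lt: "Kz i < Kw i"
  shows "s i * ((\<Sum>j<n. F j (Kw j)) - (\<Sum>j<n. F j (Kz j))) > 0"
proof -
  define \<delta> where "\<delta> j = F j (Kw j) - F j (Kz j)" for j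
  have split: "(\<Sum>j<n. F j (Kw j)) - (\<Sum>j<n. F j (Kz j)) = \<delta> i + (\<Sum>j<n. if i < j then \<delta> j else 0)"
  proof -
    have "(\<Sum>j<n. F j (Kw j)) - (\<Sum>j<n. F j (Kz j)) = (\<Sum>j<n. \<delta> j)"
      by (simp add: \<delta>_def sum_subtractf)
    also have "\<dots> = (\<Sum>j<n. (if j = i then \<delta> j else 0) + (if i < j then \<delta> j else 0))"
      by (rule sum.cong) (auto simp: \<delta>_def eq)
    also have "\<dots> = \<delta> i + (\<Sum>j<n. if i < j then \<delta> j else 0)"
      using i by (simp add: sum.distrib)
    finally show ?thesis .
  qed
  define a where "a = Kw i - \<Delta> + M"
  have Kwi: "Kw i \<ge> \<Delta>" using lowz[OF i] lt by simp
  have rest: "\<bar>\<Sum>j<n. if i < j then \<delta> j else 0\<bar> \<le> int n * (2 * C * int (E a))"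
  proof -
    have "\<bar>\<Sum>j<n. if i < j then \<delta> j else 0\<bar> \<le> (\<Sum>j<n. \<bar>if i < j then \<delta> j else 0\<bar>)"
      by (rule sum_abs)
    also have "\<dots> \<le> (\<Sum>j<n. 2 * C * int (E a))"
    proof (rule sum_mono)
      fix j assume j: "j \<in> {..<n}"
      show "\<bar>if i < j then \<delta> j else 0\<bar> \<le> 2 * C * int (E a)"
      proof (cases "i < j")
        case True
        have w: "Kw j + \<Delta> \<le> Kw i" using chain_le[OF chw True] j by simp
        have z: "Kz j + \<Delta> \<le> Kz i" using chain_le[OF chz True] j by simp
        have "E (Kw j + M) \<le> E a" using w Kwi by (intro Emono) (simp add: a_def)
        then have 1: "C * int (E (Kw j + M)) \<le> C * int (E a)" using C0 by (intro mult_left_mono) auto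
        have "E (Kz j + M) \<le> E a" using z lt Kwi by (intro Emono) (simp add: a_def)
        then have 2: "C * int (E (Kz j + M)) \<le> C * int (E a)" using C0 by (intro mult_left_mono) auto
        have "\<bar>\<delta> j\<bar> \<le> \<bar>F j (Kw j)\<bar> + \<bar>F j (Kz j)\<bar>" by (simp add: \<delta>_def)
        moreover have "\<bar>F j (Kw j)\<bar> \<le> C * int (E (Kw j + M))" using bound j by simp
        moreover have "\<bar>F j (Kz j)\<bar> \<le> C * int (E (Kz j + M))" using bound j by simp
        ultimately have "\<bar>\<delta> j\<bar> \<le> C * int (E a) + C * int (E a)"
          using 1 2 by linarith
        then show ?thesis using True by simp
      qed (use C0 in simp)
    qed
    also have "\<dots> = int n * (2 * C * int (E a))" by simp
    finally show ?thesis .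
  qed
  have main: "s i * \<delta> i > int (E (Kw i - 1 - D))"
    unfolding \<delta>_def using incr[OF i _ lt] lowz[OF i] Dl by simp
  have "E (a + T) \<le> E (Kw i - 1 - D)" using Kwi Dl by (intro Emono) (simp add: a_def)
  then have "int (E (Kw i - 1 - D)) \<ge> 2 * int n * C * int (E a)" using grow[of a] by linarith
  then have big: "s i * \<delta> i > \<bar>\<Sum>j<n. if i < j then \<delta> j else 0\<bar>" using main rest by (simp add: ac_simps)
  have "\<bar>s i * (\<Sum>j<n. if i < j then \<delta> j else 0)\<bar> = \<bar>\<Sum>j<n. if i < j then \<delta> j else 0\<bar>"
    using sgn[OF i] by (auto simp: abs_mult)
  then show ?thesis unfolding split using big by (simp add: distrib_left)
qed




lemma chain_le2:
  fixes K :: "nat \<Rightarrow> nat"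
  assumes ch: "\<forall>j. Suc j < n \<longrightarrow> K (Suc j) + \<Delta> \<le> K j"
  shows "i \<le> j \<Longrightarrow> j < n \<Longrightarrow> K j + (j - i) * \<Delta> \<le> K i"
proof (induction j)
  case 0 then show ?case by simp
next
  case (Suc j)
  have a: "K (Suc j) + \<Delta> \<le> K j" using ch Suc.prems by blast
  show ?case
  proof (cases "i = Suc j")
    case True then show ?thesis by simp
  next
    case False
    then have "K j + (j - i) * \<Delta> \<le> K i" using Suc by simp
    moreover have "Suc j - i = Suc (j - i)" using False Suc.prems by simp
    ultimately show ?thesis using a by simp
  qed
qed

locale L =
  fixes R Rt :: "nat set" and d n :: nat and As :: "int list list" and N :: nat
    and s :: "nat \<Rightarrow> int" and D C M T \<Delta>
  assumes infR: "infinite R"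
    and Rt_eq: "Rt = {enumerate R (N + d * t) | t. True}"
    and d1: "d \<ge> 1" and n1: "n \<ge> 1" and len: "length As = n"
    and bound: "\<And>j k. j < n \<Longrightarrow> \<bar>op_app R (As ! j) (e R k)\<bar> \<le> C * int (e R (k + M))"
    and incr: "\<And>j a b. j < n \<Longrightarrow> D \<le> a \<Longrightarrow> a < b \<Longrightarrow>
        s j * (op_app R (As ! j) (e R b) - op_app R (As ! j) (e R a)) > int (e R (b - 1 - D))"
    and sgn: "\<And>j. j < n \<Longrightarrow> s j = 1 \<or> s j = -1"
    and grow: "\<And>a. int (e R (a + T)) \<ge> 2 * int n * C * int (e R a)"
    and C0: "C \<ge> 0"
    and Dl: "\<Delta> \<ge> M + T + 1 + D"
    and dvd: "d dvd \<Delta>"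
begin

abbreviation "S \<equiv> tupDelta R Rt n \<Delta>"
abbreviation "dot \<equiv> dotA R As"
abbreviation "F j k \<equiv> op_app R (As ! j) (e R k)"

lemma Rt_sub: "Rt \<subseteq> R" using Rt_eq e_in[OF infR] by auto

lemma InfRt: "Inf Rt = e R N"
proof (rule cInf_eq_minimum)
  show "e R N \<in> Rt" unfolding Rt_eq by (auto intro: exI[of _ 0])
  fix x assume "x \<in> Rt"
  then show "e R N \<le> x" unfolding Rt_eq using infR by auto
qed

lemma idx_Rt: "z \<in> Rt \<Longrightarrow> \<exists>t. idx R z = N + d * t"
  unfolding Rt_eq using idx_e[OF infR] by auto

lemma S_len: "z \<in> S \<Longrightarrow> length z = n" by (simp add: tupDelta_def)

lemma S_Rt: "z \<in> S \<Longrightarrow> j < n \<Longrightarrow> z ! j \<in> Rt"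
  by (auto simp: tupDelta_def)

lemma S_R: "z \<in> S \<Longrightarrow> j < n \<Longrightarrow> z ! j \<in> R" using S_Rt Rt_sub by blast

lemma S_e: "z \<in> S \<Longrightarrow> j < n \<Longrightarrow> e R (idx R (z ! j)) = z ! j"
  using S_R e_idx[OF infR] by blast

lemma S_chain: "z \<in> S \<Longrightarrow> \<forall>j. Suc j < n \<longrightarrow> idx R (z ! Suc j) + \<Delta> \<le> idx R (z ! j)"
proof (intro allI impI)
  fix j assume z: "z \<in> S" and j: "Suc j < n"
  have h: "\<forall>i<n. z!i \<ge> sigpow R \<Delta> (if Suc i < n then z!Suc i else Inf Rt)"
    using z by (simp add: tupDelta_def)
  have "z ! j \<ge> sigpow R \<Delta> (z ! Suc j)" using h[rule_format, of j] j by simp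
  then have "e R (idx R (z ! Suc j) + \<Delta>) \<le> e R (idx R (z ! j))"
    using S_e[OF z, of j] S_e[OF z, of "Suc j"] j sigpow_e[OF infR] by (metis Suc_lessD)
  then show "idx R (z ! Suc j) + \<Delta> \<le> idx R (z ! j)" using infR by simp
qed

lemma S_last: "z \<in> S \<Longrightarrow> idx R (z ! (n - 1)) \<ge> N + \<Delta>"
proof -
  assume z: "z \<in> S"
  have nn: "n - 1 < n" using n1 by simp
  have h: "\<forall>i<n. z!i \<ge> sigpow R \<Delta> (if Suc i < n then z!Suc i else Inf Rt)"
    using z by (simp add: tupDelta_def)
  have "z ! (n-1) \<ge> sigpow R \<Delta> (Inf Rt)" using h[rule_format, OF nn] n1 by simp
  then have "e R (N + \<Delta>) \<le> e R (idx R (z ! (n-1)))" using S_e[OF z nn] by (simp add: InfRt sigpow_e[OF infR])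
  then show ?thesis using infR by simp
qed


lemma S_low: "z \<in> S \<Longrightarrow> j < n \<Longrightarrow> idx R (z ! j) \<ge> N + (n - j) * \<Delta>"
proof -
  assume z: "z \<in> S" and j: "j < n"
  have "idx R (z ! (n-1)) + (n - 1 - j) * \<Delta> \<le> idx R (z ! j)"
    using chain_le2[OF S_chain[OF z], of j "n-1"] j by simp
  moreover have "(n - j) * \<Delta> = (n - 1 - j) * \<Delta> + \<Delta>" using j
    by (metis Suc_diff_Suc diff_Suc_1 diff_commute mult_Suc add.commute)
  ultimately show ?thesis using S_last[OF z] by linarith
qed

lemma S_low1: "z \<in> S \<Longrightarrow> j < n \<Longrightarrow> idx R (z ! j) \<ge> N + \<Delta>"
proof -
  assume z: "z \<in> S" and j: "j < n"
  have "n - j \<ge> 1" using j by simp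
  then have "(n - j) * \<Delta> \<ge> \<Delta>" using mult_le_mono1[of 1 "n-j" \<Delta>] by simp
  then show ?thesis using S_low[OF z j] by linarith
qed

lemma dot_eq: "z \<in> S \<Longrightarrow> dot z = (\<Sum>j<n. F j (idx R (z ! j)))"
  unfolding dotA_def len by (intro sum.cong) (auto simp: S_e)

lemma incr2: "j < n \<Longrightarrow> D \<le> a \<Longrightarrow> a < b \<Longrightarrow> s j * (F j b - F j a) > int (e R (b - Suc D))"
  using incr[of j a b] by simp

lemma S_lowD: "z \<in> S \<Longrightarrow> j < n \<Longrightarrow> \<Delta> \<le> idx R (z ! j)"
  using S_low1 by fastforce

lemma lexS:
  assumes z: "z \<in> S" and w: "w \<in> S" and i: "i < n" and eq: "\<And>j. j < i \<Longrightarrow> z ! j = w ! j"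
    and lt: "idx R (z ! i) < idx R (w ! i)"
  shows "s i * (dot w - dot z) > 0"
  unfolding dot_eq[OF z] dot_eq[OF w]
  by (rule lex_core[where E = "e R" and F = "\<lambda>j k. op_app R (As ! j) (e R k)"
        and Kz = "\<lambda>j. idx R (z ! j)" and Kw = "\<lambda>j. idx R (w ! j)" and C = C and M = M and D = D and T = T and \<Delta> = \<Delta>])
     (use S_chain[OF z] S_chain[OF w] S_lowD[OF z] eq lt i Dl incr2 in
       \<open>auto simp: bound incr sgn grow C0 Dl e_mono_le[OF infR]\<close>)

end



context L begin

lemma dot_inj:
  assumes z: "z \<in> S" and w: "w \<in> S" and eqd: "dot z = dot w"
  shows "z = w"
proof (rule ccontr)
  assume ne: "z \<noteq> w"
  have "\<exists>i<n. z ! i \<noteq> w ! i" using ne S_len[OF z] S_len[OF w] nth_equalityI by metis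
  then have ex: "\<exists>i. i < n \<and> z ! i \<noteq> w ! i" by blast
  define i where "i = (LEAST i. i < n \<and> z ! i \<noteq> w ! i)"
  have i: "i < n" "z ! i \<noteq> w ! i" using LeastI_ex[OF ex] unfolding i_def by auto
  have eq: "z ! j = w ! j" if "j < i" for j
    using not_less_Least[of j "\<lambda>i. i < n \<and> z ! i \<noteq> w ! i"] that i(1) unfolding i_def by auto
  have "idx R (z ! i) \<noteq> idx R (w ! i)" using S_e[OF z i(1)] S_e[OF w i(1)] i(2) by metis
  then show False
  proof (cases "idx R (z ! i) < idx R (w ! i)")
    case True
    show False using lexS[OF z w i(1) eq True] eqd by simp
  next
    case False
    then have "idx R (w ! i) < idx R (z ! i)" using \<open>idx R (z ! i) \<noteq> idx R (w ! i)\<close> by simp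
    then show False using lexS[OF w z i(1) eq[symmetric]] eqd by simp
  qed
qed

lemma maxA_eq:
  assumes "TT \<subseteq> S" "z \<in> TT" "\<forall>w\<in>TT. dot w \<le> dot z"
  shows "maxA R As TT = z"
  unfolding maxA_def
proof (rule the_equality)
  show "z \<in> TT \<and> (\<forall>w\<in>TT. dot w \<le> dot z)" using assms by blast
  fix z' assume "z' \<in> TT \<and> (\<forall>w\<in>TT. dot w \<le> dot z')"
  then have "dot z = dot z'" "z' \<in> TT" using assms by force+
  then show "z' = z" using dot_inj assms by (metis subsetD)
qed

lemma minA_eq:
  assumes "TT \<subseteq> S" "z \<in> TT" "\<forall>w\<in>TT. dot z \<le> dot w"
  shows "minA R As TT = z"
  unfolding minA_def
proof (rule the_equality)
  show "z \<in> TT \<and> (\<forall>w\<in>TT. dot z \<le> dot w)" using assms by blast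
  fix z' assume "z' \<in> TT \<and> (\<forall>w\<in>TT. dot z' \<le> dot w)"
  then have "dot z = dot z'" "z' \<in> TT" using assms by force+
  then show "z' = z" using dot_inj assms by (metis subsetD)
qed

lemma ex_max:
  assumes "z0 \<in> TT" "\<forall>w\<in>TT. dot w < x"
  shows "\<exists>z\<in>TT. \<forall>w\<in>TT. dot w \<le> dot z"
proof -
  obtain z where z: "z \<in> TT" "\<forall>w. w \<in> TT \<longrightarrow> nat (x - dot z) \<le> nat (x - dot w)"
    using ex_has_least_nat[of "\<lambda>z. z \<in> TT" z0 "\<lambda>z. nat (x - dot z)"] assms(1) by blast
  have "dot w \<le> dot z" if "w \<in> TT" for w
    using z(2)[rule_format, OF that] assms(2) that z(1) by fastforce
  then show ?thesis using z(1) by blast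
qed

lemma ex_min:
  assumes "z0 \<in> TT" "\<forall>w\<in>TT. x \<le> dot w"
  shows "\<exists>z\<in>TT. \<forall>w\<in>TT. dot z \<le> dot w"
proof -
  obtain z where z: "z \<in> TT" "\<forall>w. w \<in> TT \<longrightarrow> nat (dot z - x) \<le> nat (dot w - x)"
    using ex_has_least_nat[of "\<lambda>z. z \<in> TT" z0 "\<lambda>z. nat (dot z - x)"] assms(1) by blast
  have "dot z \<le> dot w" if "w \<in> TT" for w
    using z(2)[rule_format, OF that] assms(2) that z(1) by fastforce
  then show ?thesis using z(1) by blast
qed

definition mk :: "nat \<Rightarrow> nat list" where
  "mk c = map (\<lambda>j. e R (c - j * \<Delta>)) [0..<n]"

lemma mk_S:
  assumes c: "c = N + d * t" and cl: "c \<ge> N + n * \<Delta>"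
  shows "mk c \<in> S" "idx R (mk c ! 0) = c"
proof -
  obtain u where u: "\<Delta> = d * u" using dvd by blast
  have jle: "j * \<Delta> \<le> n * \<Delta>" if "j \<le> n" for j using that by (simp add: mult_le_mono1)
  have inRt: "e R (c - j * \<Delta>) \<in> Rt" if j: "j < n" for j
  proof -
    have "j * \<Delta> \<le> n * \<Delta>" using jle[of j] j by simp
    then have "j * \<Delta> \<le> d * t" using c cl by linarith
    then have "c - j * \<Delta> = N + d * (t - j * u)"
      using c u by (simp add: diff_mult_distrib2 ac_simps)
    then show ?thesis unfolding Rt_eq by auto
  qed
  have chain: "e R (c - i * \<Delta>) \<ge> sigpow R \<Delta> (if Suc i < n then mk c ! Suc i else Inf Rt)"
    if i: "i < n" for i
  proof (cases "Suc i < n")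
    case True
    have "Suc i * \<Delta> \<le> c" using jle[of "Suc i"] True cl by simp
    then have "c - Suc i * \<Delta> + \<Delta> = c - i * \<Delta>" by simp
    then show ?thesis using True by (simp add: mk_def sigpow_e[OF infR] del: upt_Suc)
  next
    case False
    then have ni: "i = n - 1" using i by simp
    have "n * \<Delta> = i * \<Delta> + \<Delta>" using ni n1 by (metis Suc_diff_1 add.commute less_le_trans mult_Suc zero_less_one)
    then have "N + \<Delta> \<le> c - i * \<Delta>" using cl by simp
    then show ?thesis using False by (simp add: InfRt sigpow_e[OF infR] infR)
  qed
  have nth: "mk c ! i = e R (c - i * \<Delta>)" if "i < n" for i using that by (simp add: mk_def)
  have lenm: "length (mk c) = n" by (simp add: mk_def)
  show "mk c \<in> S" unfolding tupDelta_def
    using inRt chain nth lenm by (auto simp: set_conv_nth)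
  show "idx R (mk c ! 0) = c" using n1 by (simp add: mk_def idx_e[OF infR])
qed

lemma S_ne: "mk (N + n * \<Delta>) \<in> S"
proof -
  obtain u where u: "\<Delta> = d * u" using dvd by blast
  show ?thesis using mk_S(1)[of "N + n * \<Delta>" "n * u"] u by simp
qed

end



context L begin

lemma inf_less: "ereal (of_int x) > infA R As S \<longleftrightarrow> (\<exists>z\<in>S. dot z < x)"
  unfolding infA_def by (simp add: INF_less_iff)

lemma le_sup: "ereal (of_int x) \<le> supA R As S \<longleftrightarrow> (\<exists>z\<in>S. x \<le> dot z)"
proof
  assume "\<exists>z\<in>S. x \<le> dot z"
  then obtain z where "z \<in> S" "x \<le> dot z" by blast
  then show "ereal (of_int x) \<le> supA R As S" unfolding supA_def
    by (intro SUP_upper2[of z]) auto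
next
  assume a: "ereal (of_int x) \<le> supA R As S"
  show "\<exists>z\<in>S. x \<le> dot z"
  proof (rule ccontr)
    assume "\<not> (\<exists>z\<in>S. x \<le> dot z)"
    then have "\<forall>z\<in>S. dot z \<le> x - 1" by auto
    then have "supA R As S \<le> ereal (of_int (x - 1))" unfolding supA_def
      by (intro SUP_least) auto
    then have "ereal (of_int x) \<le> ereal (of_int (x - 1))" using a by (rule order_trans[rotated])
    then show False by simp
  qed
qed

lemma Pfun_eq: "Pfun R Rt \<Delta> As x = (if ereal (of_int x) > infA R As S
   then maxA R As {z\<in>S. dot z < x} else minA R As S)"
  by (simp add: Pfun_def Let_def len)

lemma Qfun_eq: "Qfun R Rt \<Delta> As x = (if ereal (of_int x) \<le> supA R As S
   then minA R As {z\<in>S. dot z \<ge> x} else maxA R As S)"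
  by (simp add: Qfun_def Let_def len)

abbreviation "P x \<equiv> Pfun R Rt \<Delta> As x"
abbreviation "Q x \<equiv> Qfun R Rt \<Delta> As x"

lemma P_gt:
  assumes "ereal (of_int x) > infA R As S"
  shows "P x \<in> S \<and> dot (P x) < x \<and> (\<forall>w\<in>S. dot w < x \<longrightarrow> dot w \<le> dot (P x))"
proof -
  obtain z0 where z0: "z0 \<in> {z\<in>S. dot z < x}" using assms inf_less by auto
  obtain z where z: "z \<in> {z\<in>S. dot z < x}" "\<forall>w\<in>{z\<in>S. dot z < x}. dot w \<le> dot z"
    using ex_max[OF z0, of x] by auto
  have "P x = z" unfolding Pfun_eq using assms maxA_eq[of "{z\<in>S. dot z < x}" z] z by auto
  then show ?thesis using z by auto
qed

lemma P_le:
  assumes "\<not> ereal (of_int x) > infA R As S"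
  shows "P x \<in> S \<and> (\<forall>w\<in>S. x \<le> dot w) \<and> (\<forall>w\<in>S. dot (P x) \<le> dot w)"
proof -
  have all: "\<forall>w\<in>S. x \<le> dot w" using assms inf_less by (auto simp: not_less)
  obtain z where z: "z \<in> S" "\<forall>w\<in>S. dot z \<le> dot w" using ex_min[OF S_ne all] by auto
  have "P x = z" unfolding Pfun_eq using assms minA_eq[of S z] z by auto
  then show ?thesis using z all by auto
qed

lemma Q_le:
  assumes "ereal (of_int x) \<le> supA R As S"
  shows "Q x \<in> S \<and> x \<le> dot (Q x) \<and> (\<forall>w\<in>S. x \<le> dot w \<longrightarrow> dot (Q x) \<le> dot w)"
proof -
  obtain z0 where z0: "z0 \<in> {z\<in>S. dot z \<ge> x}" using assms le_sup by auto
  obtain z where z: "z \<in> {z\<in>S. dot z \<ge> x}" "\<forall>w\<in>{z\<in>S. dot z \<ge> x}. dot z \<le> dot w"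
    using ex_min[OF z0, of x] by auto
  have "Q x = z" unfolding Qfun_eq using assms minA_eq[of "{z\<in>S. dot z \<ge> x}" z] z by auto
  then show ?thesis using z by auto
qed

lemma Q_gt:
  assumes "\<not> ereal (of_int x) \<le> supA R As S"
  shows "Q x \<in> S \<and> (\<forall>w\<in>S. dot w < x) \<and> (\<forall>w\<in>S. dot w \<le> dot (Q x))"
proof -
  have all: "\<forall>w\<in>S. dot w < x" using assms le_sup by (auto simp: not_le)
  obtain z where z: "z \<in> S" "\<forall>w\<in>S. dot w \<le> dot z" using ex_max[OF S_ne all] by auto
  have "Q x = z" unfolding Qfun_eq using assms maxA_eq[of S z] z by auto
  then show ?thesis using z all by auto
qed

lemma goal_i:
  "(x > dot (P x) \<longleftrightarrow> ereal (of_int x) > infA R As S) \<and>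
   (x \<le> dot (Q x) \<longleftrightarrow> ereal (of_int x) \<le> supA R As S)"
proof
  show "x > dot (P x) \<longleftrightarrow> ereal (of_int x) > infA R As S"
    using P_gt[of x] P_le[of x] by force
  show "x \<le> dot (Q x) \<longleftrightarrow> ereal (of_int x) \<le> supA R As S"
    using Q_gt[of x] Q_le[of x] by force
qed

lemma neighbor:
  assumes p: "p \<in> S" and q: "q \<in> S"
    and nb: "\<And>w. w \<in> S \<Longrightarrow> \<not> (dot p < dot w \<and> dot w < dot q) \<and> \<not> (dot q < dot w \<and> dot w < dot p)"
  shows "\<exists>\<epsilon>::int. \<epsilon> \<in> {-1, 0, 1} \<and> q ! 0 = sigpowi R (int d * \<epsilon>) (p ! 0)"
proof -
  have n0: "0 < n" using n1 by simp
  obtain ta where ta: "idx R (p ! 0) = N + d * ta" using idx_Rt[OF S_Rt[OF p n0]] by blast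
  obtain tb where tb: "idx R (q ! 0) = N + d * tb" using idx_Rt[OF S_Rt[OF q n0]] by blast
  have la: "idx R (p ! 0) \<ge> N + n * \<Delta>" using S_low[OF p n0] by simp
  have lb: "idx R (q ! 0) \<ge> N + n * \<Delta>" using S_low[OF q n0] by simp
  have s0: "s 0 = 1 \<or> s 0 = -1" using sgn[OF n0] .
  have no_gap: False if u: "u \<in> S" "v \<in> S" "idx R (u ! 0) = N + d * t1" "idx R (v ! 0) = N + d * t2"
     "t1 + 2 \<le> t2" and uv: "(u = p \<and> v = q) \<or> (u = q \<and> v = p)" for u v t1 t2
  proof -
    define c where "c = N + d * (t1 + 1)"
    have lu: "idx R (u ! 0) \<ge> N + n * \<Delta>" using S_low[OF u(1) n0] by simp
    have "d * t1 < d * (t1 + 1)" using d1 by simp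
    moreover have "d * (t1 + 1) < d * t2" using d1 u(5) by (intro mult_strict_left_mono) auto
    ultimately have "d * t1 < d * (t1 + 1)" "d * (t1 + 1) < d * t2" by auto
    then have ac: "idx R (u ! 0) < c" and cb: "c < idx R (v ! 0)" using u(3,4) by (auto simp: c_def)
    have cl: "c \<ge> N + n * \<Delta>" using lu ac by simp
    have wS: "mk c \<in> S" and wi: "idx R (mk c ! 0) = c" using mk_S[OF c_def cl] by auto
    have 1: "s 0 * (dot (mk c) - dot u) > 0" using lexS[OF u(1) wS n0] ac wi by simp
    have 2: "s 0 * (dot v - dot (mk c)) > 0" using lexS[OF wS u(2) n0] cb wi by simp
    from s0 1 2 have "(dot u < dot (mk c) \<and> dot (mk c) < dot v) \<or> (dot v < dot (mk c) \<and> dot (mk c) < dot u)"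
      by auto
    then show False using nb[OF wS] uv by auto
  qed
  have c1: "\<not> ta + 2 \<le> tb" using no_gap[OF p q ta tb] by blast
  have c2: "\<not> tb + 2 \<le> ta" using no_gap[OF q p tb ta] by blast
  have pe: "p ! 0 = e R (N + d * ta)" using S_e[OF p n0] ta by metis
  have qe: "q ! 0 = e R (N + d * tb)" using S_e[OF q n0] tb by metis
  consider "tb = ta + 1" | "tb = ta" | "ta = tb + 1" using c1 c2 by linarith
  then show ?thesis
  proof cases
    case 1
    have "sigpowi R (int d * 1) (p ! 0) = e R (N + d * ta + d)"
      unfolding sigpowi_def pe using sigpow_e[OF infR, of d] by (simp add: sigpow_def)
    then show ?thesis using qe 1 by (intro exI[of _ 1]) (simp add: algebra_simps)
  next
    case 2
    then show ?thesis using pe qe by (intro exI[of _ 0]) (simp add: sigpowi_def)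
  next
    case 3
    have "sigpowi R (int d * -1) (p ! 0) = e R (N + d * ta - d)"
      unfolding sigpowi_def pe using d1 by (simp add: sigpred_pow_e[OF infR])
    then show ?thesis using qe 3 by (intro exI[of _ "-1"]) (simp add: algebra_simps)
  qed
qed

lemma goal_ii: "\<exists>\<epsilon>::int. \<epsilon> \<in> {-1, 0, 1} \<and> Q x ! 0 = sigpowi R (int d * \<epsilon>) (P x ! 0)"
proof (cases "ereal (of_int x) > infA R As S")
  case gt: True
  show ?thesis
  proof (cases "ereal (of_int x) \<le> supA R As S")
    case True
    have p: "P x \<in> S \<and> dot (P x) < x \<and> (\<forall>w\<in>S. dot w < x \<longrightarrow> dot w \<le> dot (P x))" using P_gt[OF gt] .
    have q: "Q x \<in> S \<and> x \<le> dot (Q x) \<and> (\<forall>w\<in>S. x \<le> dot w \<longrightarrow> dot (Q x) \<le> dot w)" using Q_le[OF True] .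
    show ?thesis
    proof (rule neighbor)
      fix w assume w: "w \<in> S"
      show "\<not> (dot (P x) < dot w \<and> dot w < dot (Q x)) \<and> \<not> (dot (Q x) < dot w \<and> dot w < dot (P x))"
        using p q w by (meson le_less_trans not_le order.strict_trans)
    qed (use p q in auto)
  next
    case False
    have p: "P x \<in> S \<and> dot (P x) < x \<and> (\<forall>w\<in>S. dot w < x \<longrightarrow> dot w \<le> dot (P x))" using P_gt[OF gt] .
    have q: "Q x \<in> S \<and> (\<forall>w\<in>S. dot w < x) \<and> (\<forall>w\<in>S. dot w \<le> dot (Q x))" using Q_gt[OF False] .
    have "dot (P x) = dot (Q x)" using p q by (meson order_antisym)
    then have "P x = Q x" using p q dot_inj by blast
    then show ?thesis by (intro exI[of _ 0]) (simp add: sigpowi_def)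
  qed
next
  case le: False
  have p: "P x \<in> S \<and> (\<forall>w\<in>S. x \<le> dot w) \<and> (\<forall>w\<in>S. dot (P x) \<le> dot w)" using P_le[OF le] .
  have sup: "ereal (of_int x) \<le> supA R As S" using le_sup p by blast
  have q: "Q x \<in> S \<and> x \<le> dot (Q x) \<and> (\<forall>w\<in>S. x \<le> dot w \<longrightarrow> dot (Q x) \<le> dot w)" using Q_le[OF sup] .
  have "dot (P x) = dot (Q x)" using p q by (meson order_antisym)
  then have "P x = Q x" using p q dot_inj by blast
  then show ?thesis by (intro exI[of _ 0]) (simp add: sigpowi_def)
qed

end



theorem mainTheorem7:
  fixes R Rt :: "nat set" and d n :: nat and As :: "int list list"
  assumes "sparse R" and "d \<ge> 1" and "subd d R Rt" and "n \<ge> 1"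
    and "length As = n" and "\<forall>A\<in>set As. \<not> op_zero R A"
  shows "\<exists>\<Delta>0. \<forall>\<Delta>. d dvd \<Delta> \<and> \<Delta> \<ge> \<Delta>0 \<longrightarrow>
     (\<forall>x::int.
        (x > dotA R As (Pfun R Rt \<Delta> As x) \<longleftrightarrow>
           ereal (of_int x) > infA R As (tupDelta R Rt n \<Delta>)) \<and>
        (x \<le> dotA R As (Qfun R Rt \<Delta> As x) \<longleftrightarrow>
           ereal (of_int x) \<le> supA R As (tupDelta R Rt n \<Delta>))) \<and>
     (\<forall>x::int. \<exists>\<epsilon>::int. \<epsilon> \<in> {-1, 0, 1} \<and>
        Qfun R Rt \<Delta> As x ! 0 = sigpowi R (int d * \<epsilon>) (Pfun R Rt \<Delta> As x ! 0))"
proof -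
  note sp = assms(1)
  have infR: "infinite R" using infR[OF sp] .
  obtain N where Rt: "Rt = {enumerate R (N + d * t) | t. True}" using assms(3) by (auto simp: subd_def)
  have "\<forall>i<n. \<exists>s D. (s = 1 \<or> s = -1) \<and>
     (\<forall>a b. D \<le> a \<longrightarrow> a < b \<longrightarrow> s * (op_app R (As ! i) (e R b) - op_app R (As ! i) (e R a)) > int (e R (b - 1 - D)))"
  proof (intro allI impI)
    fix i assume "i < n"
    then have "As ! i \<in> set As" using assms(5) by simp
    then show "\<exists>s D. (s = 1 \<or> s = -1) \<and>
     (\<forall>a b. D \<le> a \<longrightarrow> a < b \<longrightarrow> s * (op_app R (As ! i) (e R b) - op_app R (As ! i) (e R a)) > int (e R (b - 1 - D)))"
      using incr[OF sp] assms(6) by blast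
  qed
  then obtain sf Df where sfD: "\<forall>i<n. (sf i = 1 \<or> sf i = -1) \<and>
     (\<forall>a b. Df i \<le> a \<longrightarrow> a < b \<longrightarrow> sf i * (op_app R (As ! i) (e R b) - op_app R (As ! i) (e R a)) > int (e R (b - 1 - Df i)))"
    by metis
  define D where "D = (\<Sum>i<n. Df i)"
  define C where "C = (\<Sum>i<n. \<Sum>k<length (As ! i). \<bar>As ! i ! k\<bar>)"
  define M where "M = (\<Sum>i<n. length (As ! i))"
  have C0: "C \<ge> 0" unfolding C_def by (intro sum_nonneg) auto
  have incrL: "sf j * (op_app R (As ! j) (e R b) - op_app R (As ! j) (e R a)) > int (e R (b - 1 - D))"
    if "j < n" "D \<le> a" "a < b" for j a b
  proof -
    have "Df j \<le> D" unfolding D_def using that(1) by (intro member_le_sum) auto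
    then have "e R (b - 1 - D) \<le> e R (b - 1 - Df j)" using infR by simp
    moreover have "sf j * (op_app R (As ! j) (e R b) - op_app R (As ! j) (e R a)) > int (e R (b - 1 - Df j))"
      using sfD that \<open>Df j \<le> D\<close> by auto
    ultimately show ?thesis by linarith
  qed
  have boundL: "\<bar>op_app R (As ! j) (e R k)\<bar> \<le> C * int (e R (k + M))" if j: "j < n" for j k
  proof -
    have "(\<Sum>k<length (As ! j). \<bar>As ! j ! k\<bar>) \<le> C"
      unfolding C_def using j by (intro member_le_sum[of j "{..<n}"]) (auto intro: sum_nonneg)
    moreover have "length (As ! j) \<le> M" unfolding M_def using j by (intro member_le_sum) auto
    then have "e R (k + length (As ! j)) \<le> e R (k + M)" using infR by simp
    ultimately have "(\<Sum>k<length (As ! j). \<bar>As ! j ! k\<bar>) * int (e R (k + length (As ! j))) \<le> C * int (e R (k + M))"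
      by (intro mult_mono) (auto intro: sum_nonneg C0)
    then show ?thesis using op_app_bound[OF infR, of "As ! j" k] by linarith
  qed
  obtain T where T: "\<forall>a. int (e R (a + T)) \<ge> (2 * int n * C) * int (e R a)"
    using growth[OF sp, of "2 * int n * C"] by blast
  show ?thesis
  proof (intro exI[of _ "M + T + 1 + D"] allI impI)
    fix \<Delta> assume H: "d dvd \<Delta> \<and> M + T + 1 + D \<le> \<Delta>"
    interpret L R Rt d n As N sf D C M T \<Delta>
      by unfold_locales (use infR Rt assms(2,4,5) incrL boundL sfD T C0 H in auto)
    show "(\<forall>x::int.
        (x > dotA R As (Pfun R Rt \<Delta> As x) \<longleftrightarrow>
           ereal (of_int x) > infA R As (tupDelta R Rt n \<Delta>)) \<and>
        (x \<le> dotA R As (Qfun R Rt \<Delta> As x) \<longleftrightarrow>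
           ereal (of_int x) \<le> supA R As (tupDelta R Rt n \<Delta>))) \<and>
     (\<forall>x::int. \<exists>\<epsilon>::int. \<epsilon> \<in> {-1, 0, 1} \<and>
        Qfun R Rt \<Delta> As x ! 0 = sigpowi R (int d * \<epsilon>) (Pfun R Rt \<Delta> As x ! 0))"
      using goal_i goal_ii by blast
  qed
qed



end
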